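(* Let $C=(c_{k,j})\in\mathbb{R}_{\max}^{p\times n}$, $\mu^+\in\mathbb{Z}_{\ge0}^p$, $\mu^-\in\mathbb{Z}_{\ge0}^n$ and $f(x)=\sum_{k=1}^p\mu^+_k\max_{j\in[n]}(c_{k,j}+x_j)-\sum_{j=1}^n\mu^-_jx_j$. Then: (1) $f(\alpha\otimes x)=f(x)+\alpha\big(\sum_{k\in[p]}\mu^+_k-\sum_{j\in[n]}\mu^-_j\big)$ for any $x\in\mathbb{R}_{\max}^n$ and $\alpha\in\mathbb{R}$; (2) $f(x)+f(y)\ge f(x\oplus y)+f(x\oplus' y)$ for any $x,y\in\mathbb{R}_{\max}^n$.
   Context: $\mathbb{R}_{\max}=\mathbb{R}\cup\{-\infty\}$; $\alpha\otimes x$ is the vector with entries $\alpha+x_j$; $x\oplus y$ and $x\oplus' y$ are the entrywise maximum and minimum of $x$ and $y$. The identities are understood for vectors on which $f$ is well defined. *)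

theory Defs
  imports "HOL-Analysis.Analysis"
begin

text \<open>Max-plus semiring R_max = R \<union> {-\<infinity>} is modelled inside ereal; a vector of
  R_max^n is a function nat \<Rightarrow> ereal whose entries with index in {1..n} are not +\<infinity>,
  a matrix of R_max^(p x n) is a function nat \<Rightarrow> nat \<Rightarrow> ereal with entries (k,j),
  k \<in> {1..p}, j \<in> {1..n}, not +\<infinity>.\<close>

definition rmax_vec :: "nat \<Rightarrow> (nat \<Rightarrow> ereal) \<Rightarrow> bool" where
  "rmax_vec n x \<longleftrightarrow> (\<forall>j\<in>{1..n}. x j \<noteq> \<infinity>)"

definition rmax_mat :: "nat \<Rightarrow> nat \<Rightarrow> (nat \<Rightarrow> nat \<Rightarrow> ereal) \<Rightarrow> bool" where
  "rmax_mat p n C \<longleftrightarrow> (\<forall>k\<in>{1..p}. \<forall>j\<in>{1..n}. C k j \<noteq> \<infinity>)"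

definition tmul :: "real \<Rightarrow> (nat \<Rightarrow> ereal) \<Rightarrow> (nat \<Rightarrow> ereal)" where
  "tmul \<alpha> x = (\<lambda>j. ereal \<alpha> + x j)"

definition tmax :: "(nat \<Rightarrow> ereal) \<Rightarrow> (nat \<Rightarrow> ereal) \<Rightarrow> (nat \<Rightarrow> ereal)" where
  "tmax x y = (\<lambda>j. max (x j) (y j))"

definition tmin :: "(nat \<Rightarrow> ereal) \<Rightarrow> (nat \<Rightarrow> ereal) \<Rightarrow> (nat \<Rightarrow> ereal)" where
  "tmin x y = (\<lambda>j. min (x j) (y j))"

text \<open>Positive part: sum_k mu+_k max_j (c_kj + x_j)  (max over the empty set is -\<infinity>).\<close>
definition fpos :: "nat \<Rightarrow> nat \<Rightarrow> (nat \<Rightarrow> nat \<Rightarrow> ereal) \<Rightarrow> (nat \<Rightarrow> nat) \<Rightarrow> (nat \<Rightarrow> ereal) \<Rightarrow> ereal" where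
  "fpos p n C mup x = (\<Sum>k\<in>{1..p}. ereal (real (mup k)) * (SUP j\<in>{1..n}. C k j + x j))"

definition fneg :: "nat \<Rightarrow> (nat \<Rightarrow> nat) \<Rightarrow> (nat \<Rightarrow> ereal) \<Rightarrow> ereal" where
  "fneg n mum x = (\<Sum>j\<in>{1..n}. ereal (real (mum j)) * x j)"

text \<open>f is well defined at x iff no expression of the form -\<infinity> + \<infinity> occurs, i.e. not both
  the positive part is -\<infinity> and the negative part (which is subtracted) is -\<infinity>.\<close>
definition f_wd :: "nat \<Rightarrow> nat \<Rightarrow> (nat \<Rightarrow> nat \<Rightarrow> ereal) \<Rightarrow> (nat \<Rightarrow> nat) \<Rightarrow> (nat \<Rightarrow> nat) \<Rightarrow> (nat \<Rightarrow> ereal) \<Rightarrow> bool" where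
  "f_wd p n C mup mum x \<longleftrightarrow> \<not> (fpos p n C mup x = -\<infinity> \<and> fneg n mum x = -\<infinity>)"

definition fval :: "nat \<Rightarrow> nat \<Rightarrow> (nat \<Rightarrow> nat \<Rightarrow> ereal) \<Rightarrow> (nat \<Rightarrow> nat) \<Rightarrow> (nat \<Rightarrow> nat) \<Rightarrow> (nat \<Rightarrow> ereal) \<Rightarrow> ereal" where
  "fval p n C mup mum x = fpos p n C mup x - fneg n mum x"

end

theory Submission
  imports Defs
begin

lemma mul_add: "(a::ereal) \<noteq> \<infinity> \<Longrightarrow> b \<noteq> \<infinity> \<Longrightarrow> ereal (real m) * (a + b) = ereal (real m) * a + ereal (real m) * b"
  by (cases a; cases b; cases "m=0") (auto simp: field_simps)

lemma mul_mono: "(a::ereal) \<le> b \<Longrightarrow> ereal (real m) * a \<le> ereal (real m) * b"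
  by (simp add: ereal_mult_left_mono)

lemma mul_ne: "(a::ereal) \<noteq> \<infinity> \<Longrightarrow> ereal (real m) * a \<noteq> \<infinity>"
  by (cases a; cases "m=0") auto

lemma maxmin: "max a b + min a b = (a::ereal) + b"
  by (simp add: max_def min_def add.commute)

lemma addmax: "(c::ereal) + max a b = max (c+a) (c+b)"
proof (cases "a \<le> b")
  case True then show ?thesis by (simp add: max_def add_left_mono)
next
  case False then have "c + b \<le> c + a" by (simp add: add_left_mono)
  with False show ?thesis by (simp add: max_def)
qed

lemma sup_fin: "\<forall>j\<in>{1..n}. (f j::ereal) \<noteq> \<infinity> \<Longrightarrow> (SUP j\<in>{1..(n::nat)}. f j) \<noteq> \<infinity>"
proof (cases "n = 0")
  case True then show ?thesis by (simp add: bot_ereal_def)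
next
  case False
  assume h: "\<forall>j\<in>{1..n}. (f j::ereal) \<noteq> \<infinity>"
  have ne: "f ` {1..n} \<noteq> {}" using False by auto
  have "(SUP j\<in>{1..n}. f j) = Max (f ` {1..n})" by (rule cSup_eq_Max) (use ne in auto)
  moreover have "Max (f ` {1..n}) \<in> f ` {1..n}" by (rule Max_in) (use ne in auto)
  ultimately show ?thesis using h by auto
qed

definition sv :: "nat \<Rightarrow> (nat \<Rightarrow> nat \<Rightarrow> ereal) \<Rightarrow> nat \<Rightarrow> (nat \<Rightarrow> ereal) \<Rightarrow> ereal" where
  "sv n C k x = (SUP j\<in>{1..n}. C k j + x j)"

lemma fpos_sv: "fpos p n C mup x = (\<Sum>k\<in>{1..p}. ereal (real (mup k)) * sv n C k x)"
  by (simp add: fpos_def sv_def)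

lemma sv_ne: "rmax_mat p n C \<Longrightarrow> rmax_vec n x \<Longrightarrow> k \<in> {1..p} \<Longrightarrow> sv n C k x \<noteq> \<infinity>"
  unfolding sv_def rmax_mat_def rmax_vec_def by (rule sup_fin) auto

lemma sv_mono: "(\<And>j. j \<in> {1..n} \<Longrightarrow> x j \<le> y j) \<Longrightarrow> sv n C k x \<le> sv n C k y"
  unfolding sv_def by (rule SUP_mono) (auto intro!: bexI add_left_mono)

lemma sv_max: "sv n C k (tmax x y) = max (sv n C k x) (sv n C k y)"
  unfolding sv_def tmax_def addmax using SUP_sup_distrib[where f="\<lambda>j. C k j + x j" and A="{1..n}" and g="\<lambda>j. C k j + y j", unfolded sup_max] by (cases "n = 0") auto

lemma sv_tmul: "sv n C k (tmul \<alpha> x) = ereal \<alpha> + sv n C k x"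
proof (cases "n = 0")
  case True then show ?thesis by (simp add: sv_def bot_ereal_def)
next
  case False
  have "sv n C k (tmul \<alpha> x) = (SUP j\<in>{1..n}. (C k j + x j) + ereal \<alpha>)"
    unfolding sv_def tmul_def by (simp add: ac_simps)
  also have "\<dots> = sv n C k x + ereal \<alpha>" unfolding sv_def
    by (rule SUP_ereal_add_left) (use False in auto)
  finally show ?thesis by (simp add: ac_simps)
qed

lemma fpos_ne: "rmax_mat p n C \<Longrightarrow> rmax_vec n x \<Longrightarrow> fpos p n C mup x \<noteq> \<infinity>"
  unfolding fpos_sv sum_Pinfty using sv_ne mul_ne by blast

lemma fneg_ne: "rmax_vec n x \<Longrightarrow> fneg n mum x \<noteq> \<infinity>"
  unfolding fneg_def sum_Pinfty rmax_vec_def using mul_ne by blast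

lemma fpos_mono: "(\<And>j. j \<in> {1..n} \<Longrightarrow> x j \<le> y j) \<Longrightarrow> fpos p n C mup x \<le> fpos p n C mup y"
  unfolding fpos_sv by (rule sum_mono) (intro mul_mono sv_mono, auto)

lemma fpos_sub:
  assumes "rmax_mat p n C" "rmax_vec n x" "rmax_vec n y"
  shows "fpos p n C mup (tmax x y) + fpos p n C mup (tmin x y) \<le> fpos p n C mup x + fpos p n C mup y"
proof -
  have "fpos p n C mup (tmax x y) + fpos p n C mup (tmin x y)
      = (\<Sum>k\<in>{1..p}. ereal (real (mup k)) * sv n C k (tmax x y) + ereal (real (mup k)) * sv n C k (tmin x y))"
    unfolding fpos_sv sum.distrib ..
  also have "\<dots> \<le> (\<Sum>k\<in>{1..p}. ereal (real (mup k)) * sv n C k x + ereal (real (mup k)) * sv n C k y)"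
  proof (rule sum_mono)
    fix k assume k: "k \<in> {1..p}"
    have nx: "sv n C k x \<noteq> \<infinity>" and ny: "sv n C k y \<noteq> \<infinity>" using sv_ne assms k by auto
    have nM: "sv n C k (tmax x y) \<noteq> \<infinity>" using nx ny by (simp add: sv_max max_def)
    have m1: "sv n C k (tmin x y) \<le> sv n C k x" by (rule sv_mono) (simp add: tmin_def)
    have m2: "sv n C k (tmin x y) \<le> sv n C k y" by (rule sv_mono) (simp add: tmin_def)
    have nm: "sv n C k (tmin x y) \<noteq> \<infinity>" using m1 nx by auto
    have "sv n C k (tmax x y) + sv n C k (tmin x y) \<le> max (sv n C k x) (sv n C k y) + min (sv n C k x) (sv n C k y)"
      unfolding sv_max using m1 m2 by (intro add_left_mono) simp
    also have "\<dots> = sv n C k x + sv n C k y" by (rule maxmin)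
    finally have "ereal (real (mup k)) * (sv n C k (tmax x y) + sv n C k (tmin x y)) \<le> ereal (real (mup k)) * (sv n C k x + sv n C k y)"
      by (rule mul_mono)
    then show "ereal (real (mup k)) * sv n C k (tmax x y) + ereal (real (mup k)) * sv n C k (tmin x y)
        \<le> ereal (real (mup k)) * sv n C k x + ereal (real (mup k)) * sv n C k y"
      using nx ny nM nm by (simp add: mul_add)
  qed
  also have "\<dots> = fpos p n C mup x + fpos p n C mup y" unfolding fpos_sv sum.distrib ..
  finally show ?thesis .
qed

lemma fneg_mod:
  assumes "rmax_vec n x" "rmax_vec n y"
  shows "fneg n mum (tmax x y) + fneg n mum (tmin x y) = fneg n mum x + fneg n mum y"
proof -
  have "fneg n mum (tmax x y) + fneg n mum (tmin x y) = (\<Sum>j\<in>{1..n}. ereal (real (mum j)) * (max (x j) (y j) + min (x j) (y j)))"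
    unfolding fneg_def sum.distrib[symmetric] tmax_def tmin_def
    by (rule sum.cong) (use assms in \<open>auto simp: rmax_vec_def mul_add max_def min_def\<close>)
  also have "\<dots> = (\<Sum>j\<in>{1..n}. ereal (real (mum j)) * (x j + y j))" by (simp add: maxmin)
  also have "\<dots> = fneg n mum x + fneg n mum y"
    unfolding fneg_def sum.distrib[symmetric]
    by (rule sum.cong) (use assms in \<open>auto simp: rmax_vec_def mul_add\<close>)
  finally show ?thesis .
qed

lemma fpos_tmul:
  assumes "rmax_mat p n C" "rmax_vec n x"
  shows "fpos p n C mup (tmul \<alpha> x) = fpos p n C mup x + ereal (\<alpha> * (\<Sum>k\<in>{1..p}. real (mup k)))"
proof -
  have "fpos p n C mup (tmul \<alpha> x) = (\<Sum>k\<in>{1..p}. ereal (real (mup k)) * sv n C k x + ereal (\<alpha> * real (mup k)))"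
    unfolding fpos_sv sv_tmul
    by (rule sum.cong) (use assms sv_ne in \<open>auto simp: mul_add ac_simps\<close>)
  also have "\<dots> = fpos p n C mup x + ereal (\<alpha> * (\<Sum>k\<in>{1..p}. real (mup k)))"
    unfolding sum.distrib fpos_sv by (simp add: sum_distrib_left)
  finally show ?thesis .
qed

lemma fneg_tmul:
  assumes "rmax_vec n x"
  shows "fneg n mum (tmul \<alpha> x) = fneg n mum x + ereal (\<alpha> * (\<Sum>j\<in>{1..n}. real (mum j)))"
proof -
  have "fneg n mum (tmul \<alpha> x) = (\<Sum>j\<in>{1..n}. ereal (real (mum j)) * x j + ereal (\<alpha> * real (mum j)))"
    unfolding fneg_def tmul_def
    by (rule sum.cong) (use assms in \<open>auto simp: rmax_vec_def mul_add ac_simps\<close>)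
  also have "\<dots> = fneg n mum x + ereal (\<alpha> * (\<Sum>j\<in>{1..n}. real (mum j)))"
    unfolding sum.distrib fneg_def by (simp add: sum_distrib_left)
  finally show ?thesis .
qed

lemma absl:
  fixes Px Py PM Pm Nx Ny NM Nm :: ereal
  assumes "Px \<noteq> \<infinity>" "Py \<noteq> \<infinity>" "PM \<noteq> \<infinity>" "Pm \<noteq> \<infinity>" "Nx \<noteq> \<infinity>" "Ny \<noteq> \<infinity>" "NM \<noteq> \<infinity>" "Nm \<noteq> \<infinity>"
    "PM + Pm \<le> Px + Py" "NM + Nm = Nx + Ny" "Pm \<le> Px" "Pm \<le> Py"
    "\<not> (Px = -\<infinity> \<and> Nx = -\<infinity>)" "\<not> (Py = -\<infinity> \<and> Ny = -\<infinity>)"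
  shows "(PM - NM) + (Pm - Nm) \<le> (Px - Nx) + (Py - Ny)"
proof (cases "Nx = -\<infinity> \<or> Ny = -\<infinity>")
  case True
  then have h: "(Px - Nx) + (Py - Ny) = \<infinity>" using assms by (cases Px; cases Py; auto)
  show ?thesis unfolding h by simp
next
  case False
  then obtain nx ny where nx: "Nx = ereal nx" and ny: "Ny = ereal ny" using assms by (cases Nx; cases Ny) auto
  obtain nM where nM: "NM = ereal nM" using assms(7,8,10) nx ny by (cases NM; cases Nm) auto
  obtain nm where nm: "Nm = ereal nm" using assms(8,10) nx ny nM by (cases Nm) auto
  show ?thesis using assms(1-4,9-12) nx ny nM nm
    by (cases Px; cases Py; cases PM; cases Pm) auto
qed

lemma absl1:
  fixes P N :: ereal and a b :: real
  assumes "P \<noteq> \<infinity>" "N \<noteq> \<infinity>" "\<not> (P = -\<infinity> \<and> N = -\<infinity>)"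
  shows "(P + ereal a) - (N + ereal b) = (P - N) + ereal (a - b)"
  using assms by (cases P; cases N) auto

theorem proposition3p1:
  fixes p n :: nat and C :: "nat \<Rightarrow> nat \<Rightarrow> ereal" and mup mum :: "nat \<Rightarrow> nat"
  assumes "rmax_mat p n C"
  shows "(\<forall>x (\<alpha>::real). rmax_vec n x \<longrightarrow> f_wd p n C mup mum x \<longrightarrow> f_wd p n C mup mum (tmul \<alpha> x) \<longrightarrow>
            fval p n C mup mum (tmul \<alpha> x) = fval p n C mup mum x
              + ereal (\<alpha> * ((\<Sum>k\<in>{1..p}. real (mup k)) - (\<Sum>j\<in>{1..n}. real (mum j)))))
        \<and> (\<forall>x y. rmax_vec n x \<longrightarrow> rmax_vec n y \<longrightarrow> f_wd p n C mup mum x \<longrightarrow> f_wd p n C mup mum y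
            \<longrightarrow> f_wd p n C mup mum (tmax x y) \<longrightarrow> f_wd p n C mup mum (tmin x y) \<longrightarrow>
            fval p n C mup mum x + fval p n C mup mum y
              \<ge> fval p n C mup mum (tmax x y) + fval p n C mup mum (tmin x y))"
proof (intro conjI allI impI)
  fix x and \<alpha> :: real
  assume x: "rmax_vec n x" and wd: "f_wd p n C mup mum x"
  show "fval p n C mup mum (tmul \<alpha> x) = fval p n C mup mum x
              + ereal (\<alpha> * ((\<Sum>k\<in>{1..p}. real (mup k)) - (\<Sum>j\<in>{1..n}. real (mum j))))"
    unfolding fval_def fpos_tmul[OF assms x] fneg_tmul[OF x]
    using absl1[OF fpos_ne[OF assms x] fneg_ne[OF x]] wd
    by (simp add: f_wd_def right_diff_distrib)
next
  fix x y
  assume x: "rmax_vec n x" and y: "rmax_vec n y" and wx: "f_wd p n C mup mum x" and wy: "f_wd p n C mup mum y"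
  have M: "rmax_vec n (tmax x y)" using x y by (auto simp: rmax_vec_def tmax_def max_def)
  have m: "rmax_vec n (tmin x y)" using x y by (auto simp: rmax_vec_def tmin_def min_def)
  have m1: "fpos p n C mup (tmin x y) \<le> fpos p n C mup x" by (rule fpos_mono) (simp add: tmin_def)
  have m2: "fpos p n C mup (tmin x y) \<le> fpos p n C mup y" by (rule fpos_mono) (simp add: tmin_def)
  show "fval p n C mup mum x + fval p n C mup mum y
              \<ge> fval p n C mup mum (tmax x y) + fval p n C mup mum (tmin x y)"
    unfolding fval_def
    by (rule absl[OF fpos_ne[OF assms x] fpos_ne[OF assms y] fpos_ne[OF assms M] fpos_ne[OF assms m]
          fneg_ne[OF x] fneg_ne[OF y] fneg_ne[OF M] fneg_ne[OF m] fpos_sub[OF assms x y]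
          fneg_mod[OF x y] m1 m2])
       (use wx wy in \<open>auto simp: f_wd_def\<close>)
qed

end
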